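(* Let $\xi>0$ be such that $D^TD-\xi^2I$ is nonsingular and let $h_\xi(\lambda)=\det H_\xi(\lambda)$. Then for every $\omega\ge0$ we have $\Im\, h_\xi(j\omega)=0$ and $\Re\, h_\xi'(j\omega)=0$, where $h_\xi'$ denotes the complex derivative of $h_\xi$.
   Context: Let $n,m,n_u,n_y$ be positive integers, $A_0,\dots,A_m\in\mathbb{R}^{n\times n}$, $B\in\mathbb{R}^{n\times n_u}$, $C\in\mathbb{R}^{n_y\times n}$, $D\in\mathbb{R}^{n_y\times n_u}$, delays $\tau_1,\dots,\tau_m\ge0$. For $\xi>0$ put $D_\xi=D^TD-\xi^2I_{n_u}$, $\tilde D_\xi=DD^T-\xi^2I_{n_y}$, and define $2n\times2n$ matrices $M_0=\begin{bmatrix} A_0-BD_\xi^{-1}D^TC & -BD_\xi^{-1}B^T\\ \xi^2 C^T\tilde D_\xi^{-1}C & -A_0^T+C^TDD_\xi^{-1}B^T\end{bmatrix}$, $M_i=\begin{bmatrix}A_i&0\\0&0\end{bmatrix}$, $M_{-i}=\begin{bmatrix}0&0\\0&-A_i^T\end{bmatrix}$, $1\le i\le m$, and $H_\xi(\lambda)=\lambda I-M_0-\sum_{i=1}^m\left(M_ie^{-\lambda\tau_i}+M_{-i}e^{\lambda\tau_i}\right)$ for $\lambda\in\mathbb{C}$. *)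

theory Defs
  imports "HOL-Analysis.Analysis"
begin

definition blockmat ::
  "real^'n^'n \<Rightarrow> real^'n^'n \<Rightarrow> real^'n^'n \<Rightarrow> real^'n^'n \<Rightarrow> real^('n + 'n)^('n + 'n)" where
  "blockmat P Q R S = (\<chi> i j. case i of
       Inl a \<Rightarrow> (case j of Inl b \<Rightarrow> P $ a $ b | Inr b \<Rightarrow> Q $ a $ b)
     | Inr a \<Rightarrow> (case j of Inl b \<Rightarrow> R $ a $ b | Inr b \<Rightarrow> S $ a $ b))"

definition Dxi :: "real^'u^'y \<Rightarrow> real \<Rightarrow> real^'u^'u" where
  "Dxi D \<xi> = transpose D ** D - \<xi>\<^sup>2 *\<^sub>R mat 1"

definition Dtxi :: "real^'u^'y \<Rightarrow> real \<Rightarrow> real^'y^'y" where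
  "Dtxi D \<xi> = D ** transpose D - \<xi>\<^sup>2 *\<^sub>R mat 1"

definition M0 :: "real^'n^'n \<Rightarrow> real^'u^'n \<Rightarrow> real^'n^'y \<Rightarrow> real^'u^'y \<Rightarrow> real
    \<Rightarrow> real^('n + 'n)^('n + 'n)" where
  "M0 A0 B C D \<xi> = blockmat
     (A0 - B ** matrix_inv (Dxi D \<xi>) ** transpose D ** C)
     (- (B ** matrix_inv (Dxi D \<xi>) ** transpose B))
     (\<xi>\<^sup>2 *\<^sub>R (transpose C ** matrix_inv (Dtxi D \<xi>) ** C))
     (- transpose A0 + transpose C ** D ** matrix_inv (Dxi D \<xi>) ** transpose B)"

definition Mpos :: "real^'n^'n \<Rightarrow> real^('n + 'n)^('n + 'n)" where
  "Mpos Ai = blockmat Ai 0 0 0"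

definition Mneg :: "real^'n^'n \<Rightarrow> real^('n + 'n)^('n + 'n)" where
  "Mneg Ai = blockmat 0 0 0 (- transpose Ai)"

text \<open>H_xi(lambda), with A 0 = A_0 and A i, tau i for 1 \<le> i \<le> m.\<close>
definition Hxi :: "nat \<Rightarrow> (nat \<Rightarrow> real^'n^'n) \<Rightarrow> real^'u^'n \<Rightarrow> real^'n^'y \<Rightarrow> real^'u^'y
    \<Rightarrow> (nat \<Rightarrow> real) \<Rightarrow> real \<Rightarrow> complex \<Rightarrow> complex^('n + 'n)^('n + 'n)" where
  "Hxi m A B C D \<tau> \<xi> z = (\<chi> i j.
      (if i = j then z else 0)
      - complex_of_real (M0 (A 0) B C D \<xi> $ i $ j)
      - (\<Sum>k\<in>{1..m}. complex_of_real (Mpos (A k) $ i $ j) * exp (- z * complex_of_real (\<tau> k))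
                     + complex_of_real (Mneg (A k) $ i $ j) * exp (z * complex_of_real (\<tau> k))))"

definition hxi :: "nat \<Rightarrow> (nat \<Rightarrow> real^'n^'n) \<Rightarrow> real^'u^'n \<Rightarrow> real^'n^'y \<Rightarrow> real^'u^'y
    \<Rightarrow> (nat \<Rightarrow> real) \<Rightarrow> real \<Rightarrow> complex \<Rightarrow> complex" where
  "hxi m A B C D \<tau> \<xi> z = det (Hxi m A B C D \<tau> \<xi> z)"

end

theory Submission
  imports Defs
begin

lemma scaleR_mat1_mulv: "((k::real) *\<^sub>R mat 1 :: real^'n^'n) *v x = k *\<^sub>R x"
proof -
  have "\<And>i. (\<Sum>j\<in>UNIV. k * (if i = j then 1 else 0) * x $ j) = k * x $ i"
  proof -
    fix i
    have "(\<Sum>j\<in>UNIV. k * (if i = j then 1 else 0) * x $ j) = (\<Sum>j\<in>UNIV. if i = j then k * x $ j else 0)"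
      by (rule sum.cong) auto
    then show "(\<Sum>j\<in>UNIV. k * (if i = j then 1 else 0) * x $ j) = k * x $ i" by simp
  qed
  then show ?thesis by (simp add: vec_eq_iff matrix_vector_mult_def mat_def)
qed

lemma Dtxi_invertible:
  fixes D :: "real^'u^'y"
  assumes "\<xi> > 0" "invertible (Dxi D \<xi>)"
  shows "invertible (Dtxi D \<xi>)"
proof -
  have kerD: "\<And>y. Dxi D \<xi> *v y = 0 \<Longrightarrow> y = 0"
    using assms(2) matrix_left_invertible_ker invertible_left_inverse by blast
  have "\<forall>x. Dtxi D \<xi> *v x = 0 \<longrightarrow> x = 0"
  proof (intro allI impI)
    fix x assume h: "Dtxi D \<xi> *v x = 0"
    have e1: "D *v (transpose D *v x) = \<xi>\<^sup>2 *\<^sub>R x"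
      using h by (simp add: Dtxi_def matrix_vector_mult_diff_rdistrib scaleR_mat1_mulv matrix_vector_mul_assoc del: transpose_matrix_vector)
    have "Dxi D \<xi> *v (transpose D *v x) = transpose D *v (D *v (transpose D *v x)) - \<xi>\<^sup>2 *\<^sub>R (transpose D *v x)"
      by (simp add: Dxi_def matrix_vector_mult_diff_rdistrib scaleR_mat1_mulv matrix_vector_mul_assoc[symmetric] del: transpose_matrix_vector)
    also have "\<dots> = 0" by (simp add: e1 matrix_vector_mult_scaleR del: transpose_matrix_vector)
    finally have "transpose D *v x = 0" by (rule kerD)
    then have "\<xi>\<^sup>2 *\<^sub>R x = 0" using e1 by simp
    then show "x = 0" using assms(1) by simp
  qed
  then show ?thesis using matrix_left_invertible_ker invertible_left_inverse by blast
qed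

lemma sym_inv:
  fixes S :: "real^'n^'n"
  assumes "transpose S = S" "invertible S"
  shows "transpose (matrix_inv S) = matrix_inv S"
proof -
  let ?X = "matrix_inv S"
  have i: "S ** ?X = mat 1" "?X ** S = mat 1"
    using assms(2) unfolding invertible_def matrix_inv_def by (metis (mono_tags, lifting) someI_ex)+
  have "transpose ?X ** S = mat 1"
    using arg_cong[OF i(1), of transpose] assms(1) by (simp add: matrix_transpose_mul)
  then have "transpose ?X = transpose ?X ** (S ** ?X)" using i by simp
  also have "\<dots> = ?X" by (simp add: matrix_mul_assoc \<open>transpose ?X ** S = mat 1\<close>)
  finally show ?thesis .
qed


lemma transpose_diff: "transpose (X - Y) = transpose X - transpose (Y::real^'n^'m)"
  by (simp add: vec_eq_iff transpose_def)

lemma transpose_neg: "transpose (- X) = - transpose (X::real^'n^'m)"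
  by (simp add: vec_eq_iff transpose_def)

lemma transpose_scaleR_mat1: "transpose (k *\<^sub>R (mat 1::real^'n^'n)) = k *\<^sub>R mat 1"
  by (simp add: transpose_scalar)

definition sg :: "'n + 'n \<Rightarrow> real" where "sg i = (case i of Inl _ \<Rightarrow> 1 | Inr _ \<Rightarrow> -1)"
definition sw :: "'n + 'n \<Rightarrow> 'n + 'n" where "sw i = (case i of Inl a \<Rightarrow> Inr a | Inr a \<Rightarrow> Inl a)"

lemma M0_sym:
  fixes D :: "real^'u^'y" and A0 :: "real^'n^'n"
  assumes "\<xi> > 0" "invertible (Dxi D \<xi>)"
  shows "M0 A0 B C D \<xi> $ sw i $ sw j * sg i * sg j = - (M0 A0 B C D \<xi> $ j $ i)"
proof -
  let ?X = "matrix_inv (Dxi D \<xi>)"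
  let ?Y = "matrix_inv (Dtxi D \<xi>)"
  have tX: "transpose ?X = ?X"
    by (rule sym_inv[OF _ assms(2)]) (simp add: Dxi_def transpose_diff transpose_scalar matrix_transpose_mul)
  have tY: "transpose ?Y = ?Y"
    by (rule sym_inv[OF _ Dtxi_invertible[OF assms]]) (simp add: Dtxi_def transpose_diff transpose_scalar matrix_transpose_mul)
  have tE: "transpose (A0 - B ** ?X ** transpose D ** C) = - (- transpose A0 + transpose C ** D ** ?X ** transpose B)"
    by (simp add: transpose_diff matrix_transpose_mul tX matrix_mul_assoc)
  have tF: "transpose (B ** ?X ** transpose B) = B ** ?X ** transpose B"
    by (simp add: matrix_transpose_mul tX matrix_mul_assoc)
  have tG: "transpose (transpose C ** ?Y ** C) = transpose C ** ?Y ** C"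
    by (simp add: matrix_transpose_mul tY matrix_mul_assoc)
  have e: "\<And>M::real^'a^'b. \<And>a b. M $ a $ b = transpose M $ b $ a" by (simp add: transpose_def)
  show ?thesis
  proof (cases i; cases j)
    fix a b assume [simp]: "i = Inl a" "j = Inl b"
    show ?thesis using e[of "A0 - B ** ?X ** transpose D ** C" b a, unfolded tE]
      by (simp add: M0_def blockmat_def sw_def sg_def)
  next
    fix a b assume [simp]: "i = Inl a" "j = Inr b"
    show ?thesis using e[of "transpose C ** ?Y ** C" b a, unfolded tG]
      by (simp add: M0_def blockmat_def sw_def sg_def)
  next
    fix a b assume [simp]: "i = Inr a" "j = Inl b"
    show ?thesis using e[of "B ** ?X ** transpose B" b a, unfolded tF]
      by (simp add: M0_def blockmat_def sw_def sg_def)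
  next
    fix a b assume [simp]: "i = Inr a" "j = Inr b"
    show ?thesis using e[of "A0 - B ** ?X ** transpose D ** C" a b, unfolded tE]
      by (simp add: M0_def blockmat_def sw_def sg_def)
  qed
qed

lemma Mpos_sym: "Mpos Ai $ sw i $ sw j * sg i * sg j = - (Mneg Ai $ j $ i)"
  by (cases i; cases j) (simp_all add: Mpos_def Mneg_def blockmat_def sw_def sg_def transpose_def)

lemma Mneg_sym: "Mneg Ai $ sw i $ sw j * sg i * sg j = - (Mpos Ai $ j $ i)"
  by (cases i; cases j) (simp_all add: Mpos_def Mneg_def blockmat_def sw_def sg_def transpose_def)

lemma sw_eq[simp]: "(sw i = sw j) = (i = j)"
  by (cases i; cases j) (simp_all add: sw_def)

lemma sg_sq: "sg i * sg i = 1"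
  by (cases i) (simp_all add: sg_def)


lemma H_sym:
  fixes D :: "real^'u^'y" and A :: "nat \<Rightarrow> real^'n^'n"
  assumes "\<xi> > 0" "invertible (Dxi D \<xi>)"
  shows "Hxi m A B C D \<tau> \<xi> z $ sw i $ sw j * complex_of_real (sg i * sg j) = - (Hxi m A B C D \<tau> \<xi> (-z) $ j $ i)"
proof -
  let ?c = "complex_of_real (sg i * sg j)"
  have m0: "complex_of_real (M0 (A 0) B C D \<xi> $ sw i $ sw j) * ?c = - complex_of_real (M0 (A 0) B C D \<xi> $ j $ i)"
    using arg_cong[OF M0_sym[OF assms, of "A 0" B C i j], of complex_of_real] by (simp add: mult.assoc)
  have mp: "complex_of_real (Mpos (A k) $ sw i $ sw j) * ?c = - complex_of_real (Mneg (A k) $ j $ i)" for k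
    using arg_cong[OF Mpos_sym[of "A k" i j], of complex_of_real] by (simp add: mult.assoc)
  have mn: "complex_of_real (Mneg (A k) $ sw i $ sw j) * ?c = - complex_of_real (Mpos (A k) $ j $ i)" for k
    using arg_cong[OF Mneg_sym[of "A k" i j], of complex_of_real] by (simp add: mult.assoc)
  have id: "(if sw i = sw j then z else 0) * ?c = - (if j = i then - z else 0)"
    using sg_sq[of i] by (cases "i = j") simp_all
  have sm: "(\<Sum>k\<in>{1..m}. complex_of_real (Mpos (A k) $ sw i $ sw j) * exp (- z * complex_of_real (\<tau> k))
                     + complex_of_real (Mneg (A k) $ sw i $ sw j) * exp (z * complex_of_real (\<tau> k))) * ?c
     = - (\<Sum>k\<in>{1..m}. complex_of_real (Mpos (A k) $ j $ i) * exp (- (- z) * complex_of_real (\<tau> k))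
                     + complex_of_real (Mneg (A k) $ j $ i) * exp ((- z) * complex_of_real (\<tau> k)))"
    unfolding sum_distrib_right sum_negf[symmetric]
  proof (rule sum.cong[OF refl])
    fix k
    have "(complex_of_real (Mpos (A k) $ sw i $ sw j) * exp (- z * complex_of_real (\<tau> k))
                     + complex_of_real (Mneg (A k) $ sw i $ sw j) * exp (z * complex_of_real (\<tau> k))) * ?c
        = (complex_of_real (Mpos (A k) $ sw i $ sw j) * ?c) * exp (- z * complex_of_real (\<tau> k))
                     + (complex_of_real (Mneg (A k) $ sw i $ sw j) * ?c) * exp (z * complex_of_real (\<tau> k))"
      by (simp only: distrib_left distrib_right mult_ac)
    also have "\<dots> = - (complex_of_real (Mpos (A k) $ j $ i) * exp (- (- z) * complex_of_real (\<tau> k))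
                     + complex_of_real (Mneg (A k) $ j $ i) * exp ((- z) * complex_of_real (\<tau> k)))"
      unfolding mp mn by simp
    finally show "(complex_of_real (Mpos (A k) $ sw i $ sw j) * exp (- z * complex_of_real (\<tau> k))
                     + complex_of_real (Mneg (A k) $ sw i $ sw j) * exp (z * complex_of_real (\<tau> k))) * ?c
        = - (complex_of_real (Mpos (A k) $ j $ i) * exp (- (- z) * complex_of_real (\<tau> k))
                     + complex_of_real (Mneg (A k) $ j $ i) * exp ((- z) * complex_of_real (\<tau> k)))" .
  qed
  show ?thesis
    unfolding Hxi_def vec_lambda_beta left_diff_distrib id m0 sm by simp
qed


definition Jm :: "complex^('n::finite+'n)^('n+'n)" where
  "Jm = (\<chi> i j. if j = sw i then complex_of_real (sg i) else 0)"

lemma sum_delta_l: "(\<Sum>l\<in>(UNIV::'a::finite set). (if l = a then c else 0) * f l) = (c::complex) * f a"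
proof -
  have "(\<Sum>l\<in>(UNIV::'a set). (if l = a then c else 0) * f l) = (\<Sum>l\<in>UNIV. if l = a then c * f l else 0)"
    by (rule sum.cong) auto
  then show ?thesis by simp
qed

lemma sum_delta_r: "(\<Sum>l\<in>(UNIV::'a::finite set). f l * (if l = a then c else 0)) = f a * (c::complex)"
  using sum_delta_l[of a c f] by (simp add: mult.commute)

lemma Jm_conj: "((Jm ** X) ** transpose Jm) $ i $ k = X $ sw i $ sw k * complex_of_real (sg i * sg k)"
proof -
  have 1: "(Jm ** X) $ i $ l = complex_of_real (sg i) * X $ sw i $ l" for l
    by (simp add: matrix_matrix_mult_def Jm_def sum_delta_l)
  have "((Jm ** X) ** transpose Jm) $ i $ k = (Jm ** X) $ i $ sw k * complex_of_real (sg k)"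
    by (simp add: matrix_matrix_mult_def Jm_def transpose_def sum_delta_r del: vec_lambda_beta)
       (simp add: sum_delta_r)
  then show ?thesis using 1 by simp
qed

lemma Jm_det: "det (Jm :: complex^('n::finite+'n)^('n+'n)) * det (Jm :: complex^('n+'n)^('n+'n)) = 1"
proof -
  have "(Jm ** mat 1) ** transpose Jm = (mat 1 :: complex^('n+'n)^('n+'n))"
    unfolding vec_eq_iff Jm_conj
    by (auto simp: mat_def sg_sq simp flip: of_real_mult)
  then have "det (Jm ** transpose Jm :: complex^('n+'n)^('n+'n)) = 1" by (simp only: matrix_mul_rid det_I)
  then show ?thesis by (simp add: det_mul)
qed

lemma det_neg_even: "det (- M :: complex^('n::finite+'n)^('n+'n)) = det M"
proof -
  have a: "- M = (\<chi> i. (-1) *s M $ i)" by (simp add: vec_eq_iff)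
  have b: "det (\<chi> i. (-1) *s M $ i) = prod (\<lambda>i. -1) (UNIV::('n+'n) set) * det (\<chi> i. M $ i)"
    by (rule det_rows_mul)
  have "det (- M) = prod (\<lambda>i. -1) (UNIV::('n+'n) set) * det M"
    unfolding a b vec_lambda_eta ..
  also have "prod (\<lambda>i. -1::complex) (UNIV::('n+'n) set) = 1"
    by (subst UNIV_Plus_UNIV[symmetric], subst prod.Plus) (auto simp: o_def simp flip: power_mult_distrib)
  finally show ?thesis by simp
qed

lemma h_even:
  fixes D :: "real^'u^'y" and A :: "nat \<Rightarrow> real^'n^'n"
  assumes "\<xi> > 0" "invertible (Dxi D \<xi>)"
  shows "hxi m A B C D \<tau> \<xi> z = hxi m A B C D \<tau> \<xi> (-z)"
proof -
  let ?H = "Hxi m A B C D \<tau> \<xi>"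
  have "(Jm ** ?H z) ** transpose Jm = - transpose (?H (-z))"
    unfolding vec_eq_iff Jm_conj H_sym[OF assms] by (simp add: transpose_def)
  then have "det ((Jm ** ?H z) ** transpose Jm) = det (?H (-z))"
    by (simp add: det_neg_even)
  moreover have "det ((Jm ** ?H z) ** transpose Jm) = det (?H z)"
    using Jm_det[where 'n='n] by (simp add: det_mul mult_ac)
  ultimately show ?thesis unfolding hxi_def by simp
qed


lemma H_cnj: "Hxi m A B C D \<tau> \<xi> (cnj z) $ i $ j = cnj (Hxi m A B C D \<tau> \<xi> z $ i $ j)"
  by (cases "i = j") (simp_all add: Hxi_def exp_cnj)

lemma h_cnj: "hxi m A B C D \<tau> \<xi> (cnj z) = cnj (hxi m A B C D \<tau> \<xi> z)"
  unfolding hxi_def det_def by (simp add: H_cnj)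

lemma h_holo: "hxi m A B C D \<tau> \<xi> holomorphic_on UNIV"
proof -
  have entry: "(\<lambda>z. Hxi m A B C D \<tau> \<xi> z $ i $ j) holomorphic_on UNIV" for i j
    unfolding Hxi_def by (cases "i = j") (auto intro!: holomorphic_intros)
  show ?thesis
    unfolding hxi_def[abs_def] det_def by (intro holomorphic_intros entry)
qed

theorem corollary1:
  fixes m :: nat
    and A :: "nat \<Rightarrow> real^'n^'n"
    and B :: "real^'u^'n"
    and C :: "real^'n^'y"
    and D :: "real^'u^'y"
    and \<tau> :: "nat \<Rightarrow> real"
    and \<xi> :: real
  assumes "m \<ge> 1"
    and "\<forall>i\<in>{1..m}. \<tau> i \<ge> 0"
    and "\<xi> > 0"
    and "invertible (Dxi D \<xi>)"
  shows "\<forall>\<omega>::real. \<omega> \<ge> 0 \<longrightarrow>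
           Im (hxi m A B C D \<tau> \<xi> (\<i> * complex_of_real \<omega>)) = 0 \<and>
           Re (deriv (hxi m A B C D \<tau> \<xi>) (\<i> * complex_of_real \<omega>)) = 0"
proof (intro allI impI)
  fix \<omega> :: real
  let ?h = "hxi m A B C D \<tau> \<xi>"
  define z where "z = \<i> * complex_of_real \<omega>"
  have cz: "cnj z = - z" by (simp add: z_def)
  have ev: "\<And>w. ?h w = ?h (-w)" using h_even[OF assms(3,4)] by blast
  have "?h z = cnj (?h z)" using ev[of z] h_cnj[of m A B C D \<tau> \<xi> z] cz by simp
  then have "Im (?h z) = Im (cnj (?h z))" by (rule arg_cong)
  then have im: "Im (?h z) = 0" by simp
  have diff: "\<And>w. (?h has_field_derivative deriv ?h w) (at w)"
    using h_holo by (meson DERIV_deriv_iff_field_differentiable holomorphic_on_imp_differentiable_at open_UNIV UNIV_I)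
  have "((\<lambda>w. ?h (- w)) has_field_derivative deriv ?h (- z) * (-1)) (at z)"
    by (rule DERIV_chain2[OF diff]) (auto intro!: derivative_eq_intros)
  moreover have "(\<lambda>w. ?h (- w)) = ?h" using ev by (rule ext[symmetric])
  ultimately have d1: "deriv ?h z = - deriv ?h (- z)" by (simp add: DERIV_imp_deriv)
  have "((cnj \<circ> ?h \<circ> cnj) has_field_derivative cnj (deriv ?h (cnj z))) (at z)"
    by (rule has_field_derivative_cnj_cnj[OF diff])
  moreover have "cnj \<circ> ?h \<circ> cnj = ?h" by (rule ext) (simp add: h_cnj)
  ultimately have d2: "deriv ?h z = cnj (deriv ?h (- z))" by (simp add: DERIV_imp_deriv cz)
  have "deriv ?h z = cnj (- deriv ?h z)" using d1 d2 by (metis minus_minus)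
  then have "Re (deriv ?h z) = Re (cnj (- deriv ?h z))" by (rule arg_cong)
  then have "Re (deriv ?h z) = 0" by simp
  then show "Im (?h (\<i> * complex_of_real \<omega>)) = 0 \<and> Re (deriv ?h (\<i> * complex_of_real \<omega>)) = 0"
    using im by (simp add: z_def)
qed

end
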